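(* Let $p>1$ and let $\varphi$ be an analytic self-map of $\mathbb{D}$ with $\varphi\in S^p$. Then the following are equivalent: (i) $D_\varphi:S^p\to S^p$ is bounded; (ii) $C_\varphi:H^p\to S^p$ is bounded; (iii) $DC_\varphi:H^p\to H^p$ is bounded.
   Context: $\mathbb{D}$ is the open unit disk. For $p>1$, $H^p$ is the Hardy space of analytic $g$ on $\mathbb{D}$ with $\|g\|_{H^p}^p=\sup_{0<r<1}\int_0^{2\pi}|g(re^{i\theta})|^p\frac{d\theta}{2\pi}<\infty$. $S^p$ is the space of analytic $f$ on $\mathbb{D}$ with $f'\in H^p$, normed by $\|f\|_{S^p}=|f(0)|+\|f'\|_{H^p}$. For an analytic self-map $\varphi$ of $\mathbb{D}$: $C_\varphi f=f\circ\varphi$, $D_\varphi f=f'\circ\varphi$, and $DC_\varphi f=(f\circ\varphi)'$. *)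

theory Defs
  imports "HOL-Complex_Analysis.Complex_Analysis"
begin

definition hardy_mean :: "real \<Rightarrow> (complex \<Rightarrow> complex) \<Rightarrow> real \<Rightarrow> real" where
  "hardy_mean p g r =
     integral {0..2*pi} (\<lambda>t. cmod (g (complex_of_real r * cis t)) powr p) / (2*pi)"

definition in_Hp :: "real \<Rightarrow> (complex \<Rightarrow> complex) \<Rightarrow> bool" where
  "in_Hp p g \<longleftrightarrow> g holomorphic_on ball 0 1 \<and> bdd_above (hardy_mean p g ` {0<..<1})"

definition Hp_norm :: "real \<Rightarrow> (complex \<Rightarrow> complex) \<Rightarrow> real" where
  "Hp_norm p g = (SUP r\<in>{0<..<1}. hardy_mean p g r) powr (1/p)"

definition in_Sp :: "real \<Rightarrow> (complex \<Rightarrow> complex) \<Rightarrow> bool" where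
  "in_Sp p f \<longleftrightarrow> f holomorphic_on ball 0 1 \<and> in_Hp p (deriv f)"

definition Sp_norm :: "real \<Rightarrow> (complex \<Rightarrow> complex) \<Rightarrow> real" where
  "Sp_norm p f = cmod (f 0) + Hp_norm p (deriv f)"

definition self_map_disk :: "(complex \<Rightarrow> complex) \<Rightarrow> bool" where
  "self_map_disk \<phi> \<longleftrightarrow> \<phi> holomorphic_on ball 0 1 \<and> \<phi> ` ball 0 1 \<subseteq> ball 0 1"

definition comp_op :: "(complex \<Rightarrow> complex) \<Rightarrow> (complex \<Rightarrow> complex) \<Rightarrow> (complex \<Rightarrow> complex)" where
  "comp_op \<phi> f = f \<circ> \<phi>"

definition diff_comp_op :: "(complex \<Rightarrow> complex) \<Rightarrow> (complex \<Rightarrow> complex) \<Rightarrow> (complex \<Rightarrow> complex)" where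
  "diff_comp_op \<phi> f = deriv f \<circ> \<phi>"

definition comp_diff_op :: "(complex \<Rightarrow> complex) \<Rightarrow> (complex \<Rightarrow> complex) \<Rightarrow> (complex \<Rightarrow> complex)" where
  "comp_diff_op \<phi> f = deriv (f \<circ> \<phi>)"

definition bounded_op ::
  "((complex \<Rightarrow> complex) \<Rightarrow> bool) \<Rightarrow> ((complex \<Rightarrow> complex) \<Rightarrow> real) \<Rightarrow>
   ((complex \<Rightarrow> complex) \<Rightarrow> bool) \<Rightarrow> ((complex \<Rightarrow> complex) \<Rightarrow> real) \<Rightarrow>
   ((complex \<Rightarrow> complex) \<Rightarrow> (complex \<Rightarrow> complex)) \<Rightarrow> bool" where
  "bounded_op inX nX inY nY T \<longleftrightarrow>
     (\<forall>f. inX f \<longrightarrow> inY (T f)) \<and> (\<exists>C. \<forall>f. inX f \<longrightarrow> nY (T f) \<le> C * nX f)"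

end

theory Submission
  imports Defs
begin

lemma young_aux:
  fixes x l p :: real
  assumes "x \<ge> 0" "l > 0" "p \<ge> 1"
  shows "x \<le> l + l powr (1-p) * x powr p"
proof (cases "x \<le> l")
  case True
  then show ?thesis by (simp add: add_increasing2)
next
  case False
  then have xl: "x > l" by simp
  have "x powr p = x * x powr (p-1)"
    using xl assms by (simp add: powr_diff powr_one_gt_zero_iff)
  also have "\<dots> \<ge> x * l powr (p-1)"
    using xl assms by (intro mult_left_mono powr_mono2) auto
  finally have "l powr (1-p) * x powr p \<ge> l powr (1-p) * (x * l powr (p-1))"
    by (simp add: mult_left_mono)
  also have "l powr (1-p) * (x * l powr (p-1)) = x"
    using assms by (simp add: powr_add[symmetric])
  finally show ?thesis using assms by simp
qed

lemma pe_core: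
  fixes f :: "complex \<Rightarrow> complex"
  assumes hol: "f holomorphic_on ball 0 1" and r: "0 < r" "r < 1" and a: "cmod a < r"
    and l: "l > 0" and p: "p \<ge> 1"
  shows "cmod (f a) \<le> r / (r - cmod a) * (l + l powr (1-p) * hardy_mean p f r)"
proof -
  define \<gamma> where "\<gamma> = circlepath 0 r"
  have cont: "continuous_on (ball 0 1) f" using hol holomorphic_on_imp_continuous_on by blast
  have sub: "cball 0 r \<subseteq> ball (0::complex) 1" using r by auto
  have hr: "f holomorphic_on ball 0 r"
    by (rule holomorphic_on_subset[OF hol]) (use sub ball_subset_cball in blast)
  have "((\<lambda>u. f u/(u-a)) has_contour_integral (2 * of_real pi * \<i> * f a)) \<gamma>"
    unfolding \<gamma>_def
    by (rule Cauchy_integral_circlepath)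
       (use cont sub a hr in \<open>auto intro: continuous_on_subset\<close>)
  then have HI: "((\<lambda>x. f (\<gamma> x) / (\<gamma> x - a) * vector_derivative \<gamma> (at x within {0..1}))
      has_integral (2 * of_real pi * \<i> * f a)) {0..1}"
    by (simp add: has_contour_integral_def)
  define h where "h = (\<lambda>t. cmod (f (complex_of_real r * cis t)) powr p)"
  have inball: "complex_of_real r * cis t \<in> ball 0 1" for t
    using r by (simp add: norm_mult)
  have contf: "continuous_on UNIV (\<lambda>t. f (complex_of_real r * cis t))"
    by (rule continuous_on_compose2[OF cont]) (use inball in \<open>auto intro!: continuous_intros\<close>)
  have conth: "continuous_on UNIV h"
    unfolding h_def using p
    by (intro continuous_on_powr' continuous_on_norm contf) auto
  have hint: "h integrable_on {0..2*pi}"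
    by (rule integrable_continuous_interval) (rule continuous_on_subset[OF conth], auto)
  have gam: "\<gamma> x = complex_of_real r * cis (2*pi*x)" for x
    unfolding \<gamma>_def circlepath by (simp add: cis_conv_exp mult_ac)
  define g where "g = (\<lambda>x. 2*pi*r/(r - cmod a) * (l + l powr (1-p) * h (2*pi*x)))"
  have bnd: "norm (f (\<gamma> x) / (\<gamma> x - a) * vector_derivative \<gamma> (at x within {0..1})) \<le> g x"
    if x: "x \<in> {0..1}" for x
  proof -
    have vd: "vector_derivative \<gamma> (at x within {0..1}) = 2 * pi * \<i> * r * exp(2 * of_real pi * \<i> * x)"
      unfolding \<gamma>_def using x vector_derivative_circlepath01 by auto
    have nvd: "norm (vector_derivative \<gamma> (at x within {0..1})) = 2*pi*r"
      using r by (simp add: vd norm_mult)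
    have ng: "norm (\<gamma> x) = r" using r by (simp add: gam norm_mult)
    have den: "norm (\<gamma> x - a) \<ge> r - cmod a"
      using norm_triangle_ineq2[of "\<gamma> x" a] ng by simp
    have ra: "r - cmod a > 0" using a by simp
    have "norm (f (\<gamma> x) / (\<gamma> x - a)) \<le> norm (f (\<gamma> x)) / (r - cmod a)"
      unfolding norm_divide using den ra by (intro divide_left_mono) (auto intro!: mult_pos_pos)
    also have "norm (f (\<gamma> x)) \<le> l + l powr (1-p) * h (2*pi*x)"
      unfolding h_def gam using young_aux[OF norm_ge_zero l p] by blast
    finally have 1: "norm (f (\<gamma> x) / (\<gamma> x - a)) \<le> (l + l powr (1-p) * h (2*pi*x)) / (r - cmod a)"
      using ra by (simp add: divide_right_mono)
    have "norm (f (\<gamma> x) / (\<gamma> x - a) * vector_derivative \<gamma> (at x within {0..1}))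
        = norm (f (\<gamma> x) / (\<gamma> x - a)) * (2*pi*r)"
      by (subst norm_mult) (simp only: nvd)
    also have "\<dots> \<le> (l + l powr (1-p) * h (2*pi*x)) / (r - cmod a) * (2*pi*r)"
      using 1 r by (intro mult_right_mono) auto
    also have "\<dots> = g x" unfolding g_def by simp
    finally show ?thesis .
  qed
  have stretch: "((\<lambda>x. h (2*pi*x)) has_integral (1/(2*pi)) *\<^sub>R integral {0..2*pi} h) ((\<lambda>x. x/(2*pi)) ` {0..2*pi})"
    using has_integral_stretch_real[OF integrable_integral[OF hint], of "2*pi"] by simp
  have img: "(\<lambda>x. x/(2*pi)) ` {0..2*pi} = {0..1::real}"
  proof -
    have "bij_betw (\<lambda>x. x/(2*pi)) {0..2*pi} {0..1::real}"
      by (rule bij_betwI[of _ _ _ "\<lambda>x. x*(2*pi)"]) (auto simp: field_simps)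
    then show ?thesis by (simp add: bij_betw_def)
  qed
  have hm: "hardy_mean p f r = integral {0..2*pi} h / (2*pi)"
    unfolding hardy_mean_def h_def ..
  have stretch': "((\<lambda>x. h (2*pi*x)) has_integral hardy_mean p f r) {0..1}"
    using stretch unfolding img hm by simp
  have gint: "(g has_integral 2*pi*r/(r - cmod a) * (l + l powr (1-p) * hardy_mean p f r)) {0..1}"
    unfolding g_def
    by (intro has_integral_mult_right has_integral_add has_integral_const_real[of l 0 1, simplified]
          stretch') 
  have "norm (2 * of_real pi * \<i> * f a) \<le> 2*pi*r/(r - cmod a) * (l + l powr (1-p) * hardy_mean p f r)"
    using integral_norm_bound_integral[OF has_integral_integrable[OF HI] has_integral_integrable[OF gint] bnd]
    unfolding integral_unique[OF HI] integral_unique[OF gint] .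
  then have "2*pi * cmod (f a) \<le> 2*pi * (r/(r - cmod a) * (l + l powr (1-p) * hardy_mean p f r))"
    by (simp add: norm_mult)
  then show ?thesis using pi_gt_zero by (simp only: mult_le_cancel_left_pos[of "2*pi"])
qed


lemma hardy_mean_nonneg: "hardy_mean p f r \<ge> 0"
proof -
  let ?F = "\<lambda>t. cmod (f (complex_of_real r * cis t)) powr p"
  have "integral {0..2*pi} ?F \<ge> 0"
  proof (cases "?F integrable_on {0..2*pi}")
    case True then show ?thesis by (rule integral_nonneg) simp
  next
    case False then show ?thesis by (simp add: not_integrable_integral)
  qed
  then show ?thesis unfolding hardy_mean_def by simp
qed

lemma Hp_norm_nonneg: "Hp_norm p f \<ge> 0"
  unfolding Hp_norm_def by simp

lemma point_eval:
  fixes f :: "complex \<Rightarrow> complex"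
  assumes H: "in_Hp p f" and p: "p > 1" and a: "a \<in> ball 0 1"
  shows "cmod (f a) \<le> (2 * ((1 + cmod a)/2) / ((1 + cmod a)/2 - cmod a)) * Hp_norm p f"
proof -
  define r where "r = (1 + cmod a)/2"
  have a1: "cmod a < 1" using a by simp
  have r: "0 < r" "r < 1" "cmod a < r" unfolding r_def using a1 norm_ge_zero[of a] by (auto simp: add_pos_nonneg)
  have hol: "f holomorphic_on ball 0 1" and bdd: "bdd_above (hardy_mean p f ` {0<..<1})"
    using H unfolding in_Hp_def by auto
  define S where "S = (SUP r\<in>{0<..<1}. hardy_mean p f r)"
  have HS: "hardy_mean p f r \<le> S" unfolding S_def
    by (rule cSUP_upper[OF _ bdd]) (use r in auto)
  have S0: "S \<ge> 0" using HS hardy_mean_nonneg[of p f r] by linarith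
  have N: "Hp_norm p f = S powr (1/p)" unfolding Hp_norm_def S_def ..
  define K where "K = r / (r - cmod a)"
  have K0: "K > 0" unfolding K_def using r by simp
  have core: "cmod (f a) \<le> K * (l + l powr (1-p) * hardy_mean p f r)" if "l > 0" for l
    unfolding K_def using pe_core[OF hol r(1,2) r(3) that] p by simp
  show ?thesis
  proof (cases "S = 0")
    case True
    have Hz: "hardy_mean p f r = 0" using HS hardy_mean_nonneg[of p f r] True by linarith
    have "cmod (f a) \<le> 0"
    proof (rule ccontr)
      assume "\<not> cmod (f a) \<le> 0"
      then have pos: "cmod (f a) > 0" by simp
      have "cmod (f a) \<le> K * (cmod (f a) / (2*K))"
        using core[of "cmod (f a) / (2*K)"] pos K0 Hz by simp
      also have "\<dots> = cmod (f a) / 2" using K0 by simp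
      finally show False using pos by simp
    qed
    moreover have "0 \<le> (2 * r / (r - cmod a)) * Hp_norm p f"
      using Hp_norm_nonneg[of p f] r by (intro mult_nonneg_nonneg) auto
    ultimately show ?thesis unfolding r_def by linarith
  next
    case False
    then have Sp: "S > 0" using S0 by simp
    define l where "l = S powr (1/p)"
    have l0: "l > 0" unfolding l_def using Sp by simp
    have "l powr (1-p) * hardy_mean p f r \<le> l powr (1-p) * S"
      using HS by (intro mult_left_mono) auto
    also have "l powr (1-p) * S = l"
    proof -
      have "l powr (1-p) = S powr ((1-p)/p)" unfolding l_def using Sp by (simp add: powr_powr)
      then have "l powr (1-p) * S = S powr ((1-p)/p) * S powr 1" using Sp by simp
      also have "\<dots> = S powr ((1-p)/p + 1)" by (simp add: powr_add)
      also have "(1-p)/p + 1 = 1/p" using p by (simp add: field_simps)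
      finally show ?thesis unfolding l_def .
    qed
    finally have "cmod (f a) \<le> K * (l + l)"
      using core[OF l0] K0 by (meson add_left_mono mult_left_mono order.trans less_imp_le)
    then show ?thesis unfolding N l_def K_def r_def by (simp add: algebra_simps)
  qed
qed

lemma hm_cong:
  assumes "\<forall>z\<in>ball 0 1. f z = g z" "0 < r" "r < 1"
  shows "hardy_mean p f r = hardy_mean p g r"
proof -
  have "(\<lambda>t. cmod (f (complex_of_real r * cis t)) powr p) = (\<lambda>t. cmod (g (complex_of_real r * cis t)) powr p)"
    using assms by (auto simp: norm_mult)
  then show ?thesis unfolding hardy_mean_def by simp
qed

lemma Hp_cong:
  assumes "\<forall>z\<in>ball 0 1. f z = g z"
  shows "in_Hp p f = in_Hp p g \<and> Hp_norm p f = Hp_norm p g"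
proof -
  have im: "hardy_mean p f ` {0<..<1} = hardy_mean p g ` {0<..<1}"
    using hm_cong[OF assms] by (intro image_cong) auto
  have h: "f holomorphic_on ball 0 1 \<longleftrightarrow> g holomorphic_on ball 0 1"
    using assms by (intro holomorphic_cong) auto
  show ?thesis unfolding in_Hp_def Hp_norm_def im h by simp
qed

lemma deriv_ball_cong:
  assumes "\<forall>z\<in>ball 0 1. f z = g z" "z \<in> ball (0::complex) 1"
  shows "deriv f z = deriv g z"
proof (rule deriv_cong_ev)
  show "\<forall>\<^sub>F x in nhds z. f x = g x"
    using eventually_nhds_in_open[OF open_ball assms(2)] assms(1) by (auto elim!: eventually_mono)
qed simp

lemma Sp_cong:
  assumes "\<forall>z\<in>ball 0 1. f z = g z"
  shows "in_Sp p f = in_Sp p g \<and> Sp_norm p f = Sp_norm p g"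
proof -
  have d: "\<forall>z\<in>ball 0 1. deriv f z = deriv g z" using deriv_ball_cong[OF assms] by blast
  have h: "f holomorphic_on ball 0 1 \<longleftrightarrow> g holomorphic_on ball 0 1"
    using assms by (intro holomorphic_cong) auto
  have 0: "f 0 = g 0" using assms by simp
  show ?thesis unfolding in_Sp_def Sp_norm_def using Hp_cong[OF d] h 0 by simp
qed

theorem theorem3p2:
  fixes p :: real and \<phi> :: "complex \<Rightarrow> complex"
  assumes "p > 1"
    and "self_map_disk \<phi>"
    and "in_Sp p \<phi>"
  shows "(bounded_op (in_Sp p) (Sp_norm p) (in_Sp p) (Sp_norm p) (diff_comp_op \<phi>)
          \<longleftrightarrow> bounded_op (in_Hp p) (Hp_norm p) (in_Sp p) (Sp_norm p) (comp_op \<phi>))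
       \<and> (bounded_op (in_Hp p) (Hp_norm p) (in_Sp p) (Sp_norm p) (comp_op \<phi>)
          \<longleftrightarrow> bounded_op (in_Hp p) (Hp_norm p) (in_Hp p) (Hp_norm p) (comp_diff_op \<phi>))"
proof -
  have phol: "\<phi> holomorphic_on ball 0 1" and pin: "\<phi> ` ball 0 1 \<subseteq> ball 0 1"
    using assms(2) unfolding self_map_disk_def by auto
  have p0: "\<phi> 0 \<in> ball 0 1" using pin by (meson centre_in_ball image_subset_iff zero_less_one)
  have "bounded_op (in_Sp p) (Sp_norm p) (in_Sp p) (Sp_norm p) (diff_comp_op \<phi>)
          \<longleftrightarrow> bounded_op (in_Hp p) (Hp_norm p) (in_Sp p) (Sp_norm p) (comp_op \<phi>)"
  proof
    assume B: "bounded_op (in_Sp p) (Sp_norm p) (in_Sp p) (Sp_norm p) (diff_comp_op \<phi>)"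
    then obtain C where C: "\<And>f. in_Sp p f \<Longrightarrow> Sp_norm p (diff_comp_op \<phi> f) \<le> C * Sp_norm p f"
      and M: "\<And>f. in_Sp p f \<Longrightarrow> in_Sp p (diff_comp_op \<phi> f)"
      unfolding bounded_op_def by blast
    have *: "in_Sp p (comp_op \<phi> g) \<and> Sp_norm p (comp_op \<phi> g) \<le> C * Hp_norm p g" if g: "in_Hp p g" for g
    proof -
      have ghol: "g holomorphic_on ball 0 1" using g unfolding in_Hp_def by auto
      obtain F where F: "\<And>x. x \<in> ball 0 1 \<Longrightarrow> (F has_field_derivative g x) (at x within ball 0 1)"
        using holomorphic_convex_primitive'[OF convex_ball open_ball ghol] by blast
      define F0 where "F0 = (\<lambda>z. F z - F 0)"
      have F0d: "(F0 has_field_derivative g x) (at x)" if "x \<in> ball 0 1" for x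
        unfolding F0_def using F[OF that] that
        by (auto intro!: derivative_eq_intros simp: at_within_open[OF _ open_ball])
      have dF0: "\<forall>z\<in>ball 0 1. deriv F0 z = g z" using F0d DERIV_imp_deriv by blast
      have F0hol: "F0 holomorphic_on ball 0 1"
        using F0d holomorphic_on_open[OF open_ball] by blast
      have F0S: "in_Sp p F0" unfolding in_Sp_def using F0hol Hp_cong[OF dF0] g by simp
      have nF0: "Sp_norm p F0 = Hp_norm p g" unfolding Sp_norm_def using Hp_cong[OF dF0]
        by (simp add: F0_def)
      have eq: "\<forall>z\<in>ball 0 1. diff_comp_op \<phi> F0 z = comp_op \<phi> g z"
        using dF0 pin by (auto simp: diff_comp_op_def comp_op_def)
      show ?thesis using Sp_cong[OF eq, of p] M[OF F0S] C[OF F0S] nF0 by simp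
    qed
    then show "bounded_op (in_Hp p) (Hp_norm p) (in_Sp p) (Sp_norm p) (comp_op \<phi>)"
      unfolding bounded_op_def by blast
  next
    assume B: "bounded_op (in_Hp p) (Hp_norm p) (in_Sp p) (Sp_norm p) (comp_op \<phi>)"
    then obtain C where C: "\<And>f. in_Hp p f \<Longrightarrow> Sp_norm p (comp_op \<phi> f) \<le> C * Hp_norm p f"
      and M: "\<And>f. in_Hp p f \<Longrightarrow> in_Sp p (comp_op \<phi> f)"
      unfolding bounded_op_def by blast
    have *: "in_Sp p (diff_comp_op \<phi> f) \<and> Sp_norm p (diff_comp_op \<phi> f) \<le> max C 0 * Sp_norm p f"
      if f: "in_Sp p f" for f
    proof -
      have d: "in_Hp p (deriv f)" using f unfolding in_Sp_def by auto
      have e: "diff_comp_op \<phi> f = comp_op \<phi> (deriv f)"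
        unfolding diff_comp_op_def comp_op_def ..
      have "C * Hp_norm p (deriv f) \<le> max C 0 * Hp_norm p (deriv f)"
        using Hp_norm_nonneg by (intro mult_right_mono) auto
      also have "\<dots> \<le> max C 0 * Sp_norm p f"
        unfolding Sp_norm_def by (intro mult_left_mono) auto
      finally show ?thesis using M[OF d] C[OF d] unfolding e by simp
    qed
    then show "bounded_op (in_Sp p) (Sp_norm p) (in_Sp p) (Sp_norm p) (diff_comp_op \<phi>)"
      unfolding bounded_op_def by blast
  qed
  moreover have "bounded_op (in_Hp p) (Hp_norm p) (in_Sp p) (Sp_norm p) (comp_op \<phi>)
          \<longleftrightarrow> bounded_op (in_Hp p) (Hp_norm p) (in_Hp p) (Hp_norm p) (comp_diff_op \<phi>)"
  proof
    assume B: "bounded_op (in_Hp p) (Hp_norm p) (in_Sp p) (Sp_norm p) (comp_op \<phi>)"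
    then obtain C where C: "\<And>f. in_Hp p f \<Longrightarrow> Sp_norm p (comp_op \<phi> f) \<le> C * Hp_norm p f"
      and M: "\<And>f. in_Hp p f \<Longrightarrow> in_Sp p (comp_op \<phi> f)"
      unfolding bounded_op_def by blast
    have *: "in_Hp p (comp_diff_op \<phi> f) \<and> Hp_norm p (comp_diff_op \<phi> f) \<le> C * Hp_norm p f"
      if f: "in_Hp p f" for f
    proof -
      have e: "comp_diff_op \<phi> f = deriv (comp_op \<phi> f)"
        unfolding comp_diff_op_def comp_op_def ..
      have "Hp_norm p (deriv (comp_op \<phi> f)) \<le> Sp_norm p (comp_op \<phi> f)"
        unfolding Sp_norm_def by simp
      then show ?thesis using M[OF f] C[OF f] unfolding e in_Sp_def by simp
    qed
    then show "bounded_op (in_Hp p) (Hp_norm p) (in_Hp p) (Hp_norm p) (comp_diff_op \<phi>)"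
      unfolding bounded_op_def by blast
  next
    assume B: "bounded_op (in_Hp p) (Hp_norm p) (in_Hp p) (Hp_norm p) (comp_diff_op \<phi>)"
    then obtain C where C: "\<And>f. in_Hp p f \<Longrightarrow> Hp_norm p (comp_diff_op \<phi> f) \<le> C * Hp_norm p f"
      and M: "\<And>f. in_Hp p f \<Longrightarrow> in_Hp p (comp_diff_op \<phi> f)"
      unfolding bounded_op_def by blast
    define K where "K = 2 * ((1 + cmod (\<phi> 0))/2) / ((1 + cmod (\<phi> 0))/2 - cmod (\<phi> 0))"
    have *: "in_Sp p (comp_op \<phi> f) \<and> Sp_norm p (comp_op \<phi> f) \<le> (K + C) * Hp_norm p f"
      if f: "in_Hp p f" for f
    proof -
      have fhol: "f holomorphic_on ball 0 1" using f unfolding in_Hp_def by auto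
      have e: "comp_diff_op \<phi> f = deriv (comp_op \<phi> f)"
        unfolding comp_diff_op_def comp_op_def ..
      have hol: "comp_op \<phi> f holomorphic_on ball 0 1"
        unfolding comp_op_def by (rule holomorphic_on_compose_gen[OF phol fhol pin])
      have pe: "cmod (f (\<phi> 0)) \<le> K * Hp_norm p f"
        unfolding K_def by (rule point_eval[OF f assms(1) p0])
      have "Sp_norm p (comp_op \<phi> f) = cmod (f (\<phi> 0)) + Hp_norm p (comp_diff_op \<phi> f)"
        unfolding Sp_norm_def e by (simp add: comp_op_def)
      also have "\<dots> \<le> K * Hp_norm p f + C * Hp_norm p f" using pe C[OF f] by simp
      finally show ?thesis using hol M[OF f] unfolding in_Sp_def e by (simp add: algebra_simps)
    qed
    then show "bounded_op (in_Hp p) (Hp_norm p) (in_Sp p) (Sp_norm p) (comp_op \<phi>)"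
      unfolding bounded_op_def by blast
  qed
  ultimately show ?thesis by blast
qed

end
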